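(* For all integers $n\ge2$ and $k\ge1$: (a) the eccentricity of the root $\mathbf r=00\ldots0$ in $H_{n,k}$ equals $k$, and the radius of $H_{n,k}$ equals $k$; (b) the diameter of $H_{n,k}$ equals $2k-1$.
   Context: Let $n\ge 2$ and $k\ge 1$ be integers. $H_{n,k}$ is the simple undirected graph with vertex set $V_{n,k}=\mathbb{Z}_n^k$ (so $|V_{n,k}|=n^k$), whose vertices are written as strings $x_1x_2\ldots x_k$ with $x_j\in\mathbb{Z}_n=\{0,1,\ldots,n-1\}$. Two distinct vertices are adjacent if and only if they are related by one of the following rules. For $i=0$ the prefix $x_1\ldots x_i$ is empty, and "$0\ldots0$" denotes a string of zeros completing the word to length $k$. (R1) $x_1\ldots x_{k-1}x_k\sim x_1\ldots x_{k-1}y_k$ whenever $y_k\neq x_k$. (R2) For $0\le i\le k-2$: $x_1\ldots x_i0\ldots0\sim x_1\ldots x_ix_{i+1}\ldots x_k$ whenever $x_j\neq 0$ for all $i+1\le j\le k$. (R3) For $1\le i\le k-1$: $x_1\ldots x_{i-1}x_i0\ldots0\sim x_1\ldots x_{i-1}y_i0\ldots0$ whenever $x_i,y_i\neq0$ and $x_i\ne y_i$. In particular, $H_{n,1}$ is the complete graph $K_n$. The root of $H_{n,k}$ is the vertex $\mathbf r=00\ldots0$. The eccentricity of a vertex is its maximum distance to the other vertices; the radius (resp. diameter) is the minimum (resp. maximum) eccentricity. *)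

theory Defs
  imports Main "HOL-Library.Extended_Nat"
begin

definition Hverts :: "nat \<Rightarrow> nat \<Rightarrow> nat list set" where
  "Hverts n k = {xs. length xs = k \<and> (\<forall>x\<in>set xs. x < n)}"

definition R1 :: "nat \<Rightarrow> nat list \<Rightarrow> nat list \<Rightarrow> bool" where
  "R1 k x y \<longleftrightarrow> take (k - 1) x = take (k - 1) y \<and> last x \<noteq> last y"

definition R2 :: "nat \<Rightarrow> nat list \<Rightarrow> nat list \<Rightarrow> bool" where
  "R2 k x y \<longleftrightarrow> (\<exists>i. i + 2 \<le> k \<and> x = take i y @ replicate (k - i) 0
                       \<and> (\<forall>j. i \<le> j \<and> j < k \<longrightarrow> y ! j \<noteq> 0))"

text \<open>(R3): for 1 <= i <= k-1, x_1..x_{i-1} a 0..0 ~ x_1..x_{i-1} b 0..0 with a, b nonzero, a <> b.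
  Here p = x_1..x_{i-1}, so length p = i - 1.\<close>
definition R3 :: "nat \<Rightarrow> nat list \<Rightarrow> nat list \<Rightarrow> bool" where
  "R3 k x y \<longleftrightarrow> (\<exists>i p a b. 1 \<le> i \<and> i \<le> k - 1 \<and> length p = i - 1
       \<and> a \<noteq> 0 \<and> b \<noteq> 0 \<and> a \<noteq> b
       \<and> x = p @ [a] @ replicate (k - i) 0 \<and> y = p @ [b] @ replicate (k - i) 0)"

definition Hadj :: "nat \<Rightarrow> nat \<Rightarrow> nat list \<Rightarrow> nat list \<Rightarrow> bool" where
  "Hadj n k x y \<longleftrightarrow> x \<in> Hverts n k \<and> y \<in> Hverts n k \<and> x \<noteq> y \<and>
     (R1 k x y \<or> R2 k x y \<or> R2 k y x \<or> R3 k x y)"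

text \<open>Graph distance (infinity if no walk exists).\<close>
definition Hdist :: "nat \<Rightarrow> nat \<Rightarrow> nat list \<Rightarrow> nat list \<Rightarrow> enat" where
  "Hdist n k u v = (INF d \<in> {d. (Hadj n k ^^ d) u v}. enat d)"

definition Hecc :: "nat \<Rightarrow> nat \<Rightarrow> nat list \<Rightarrow> enat" where
  "Hecc n k u = (SUP v \<in> Hverts n k. Hdist n k u v)"

definition Hradius :: "nat \<Rightarrow> nat \<Rightarrow> enat" where
  "Hradius n k = (INF u \<in> Hverts n k. Hecc n k u)"

definition Hdiam :: "nat \<Rightarrow> nat \<Rightarrow> enat" where
  "Hdiam n k = (SUP u \<in> Hverts n k. Hecc n k u)"

definition Hroot :: "nat \<Rightarrow> nat list" where
  "Hroot k = replicate k 0"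

end

theory Submission
  imports Defs
begin

definition W :: "nat \<Rightarrow> nat \<Rightarrow> nat \<Rightarrow> nat list \<Rightarrow> nat list \<Rightarrow> bool" where
  "W n k d u v \<longleftrightarrow> (\<exists>d'\<le>d. (Hadj n k ^^ d') u v)"

lemma W_refl: "W n k d u u"
  unfolding W_def by (auto intro: relpowp_0_I)

lemma W_mono: "W n k d u v \<Longrightarrow> d \<le> d2 \<Longrightarrow> W n k d2 u v"
  unfolding W_def by (meson order_trans)

lemma W_trans: "W n k d1 u v \<Longrightarrow> W n k d2 v w \<Longrightarrow> W n k (d1 + d2) u w"
  unfolding W_def by (meson add_mono relpowp_trans)

lemma W_edge: "Hadj n k u v \<Longrightarrow> W n k 1 u v"
  unfolding W_def by (metis relpowp_1 order_refl)

lemma Hadj_sym: "Hadj n k x y \<Longrightarrow> Hadj n k y x"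
  unfolding Hadj_def R1_def R3_def by metis

lemma relpow_sym: "(Hadj n k ^^ d) x y \<Longrightarrow> (Hadj n k ^^ d) y x"
proof (induction d arbitrary: y)
  case 0 then show ?case by simp
next
  case (Suc d)
  then obtain z where "(Hadj n k ^^ d) x z" "Hadj n k z y" by (auto elim: relpowp_Suc_E)
  then show ?case using Suc.IH Hadj_sym by (meson relpowp_Suc_I2)
qed

lemma W_sym: "W n k d u v \<Longrightarrow> W n k d v u"
  unfolding W_def using relpow_sym by blast

lemma Hadj_lift:
  assumes "Hadj n m x y" "m \<ge> 1" "c < n"
  shows "Hadj n (Suc m) (c#x) (c#y)"
proof -
  have lx: "length x = m" "length y = m" using assms(1) unfolding Hadj_def Hverts_def by auto
  have V: "c#x \<in> Hverts n (Suc m)" "c#y \<in> Hverts n (Suc m)" "c#x \<noteq> c#y"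
    using assms unfolding Hadj_def Hverts_def by auto
  have r1: "R1 (Suc m) (c#x) (c#y)" if "R1 m x y"
  proof -
    have "x \<noteq> []" "y \<noteq> []" using lx assms(2) by auto
    then show ?thesis using that assms(2) unfolding R1_def
      by (cases m) auto
  qed
  have r2: "R2 (Suc m) (c#x) (c#y)" if "R2 m x y" for x y :: "nat list"
  proof -
    from that obtain i where i: "i + 2 \<le> m" "x = take i y @ replicate (m - i) 0"
      "\<forall>j. i \<le> j \<and> j < m \<longrightarrow> y ! j \<noteq> 0" unfolding R2_def by blast
    show ?thesis unfolding R2_def
    proof (intro exI[of _ "Suc i"] conjI allI impI)
      show "Suc i + 2 \<le> Suc m" using i by simp
      show "c # x = take (Suc i) (c # y) @ replicate (Suc m - Suc i) 0" using i by simp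
      fix j assume "Suc i \<le> j \<and> j < Suc m"
      then show "(c # y) ! j \<noteq> 0" using i(3) by (cases j) auto
    qed
  qed
  have r3: "R3 (Suc m) (c#x) (c#y)" if "R3 m x y"
  proof -
    from that obtain i p a b where h: "1 \<le> i" "i \<le> m - 1" "length p = i - 1"
       "a \<noteq> 0" "b \<noteq> 0" "a \<noteq> b" "x = p @ [a] @ replicate (m - i) 0" "y = p @ [b] @ replicate (m - i) 0"
      unfolding R3_def by blast
    show ?thesis unfolding R3_def
      by (rule exI[of _ "Suc i"], rule exI[of _ "c#p"], rule exI[of _ a], rule exI[of _ b]) (use h in auto)
  qed
  show ?thesis using assms(1) V r1 r2 r3 unfolding Hadj_def by blast
qed

lemma relpow_lift:
  assumes "(Hadj n m ^^ d) x y" "m \<ge> 1" "c < n"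
  shows "(Hadj n (Suc m) ^^ d) (c#x) (c#y)"
  using assms(1)
proof (induction d arbitrary: y)
  case 0 then show ?case by simp
next
  case (Suc d)
  then obtain z where "(Hadj n m ^^ d) x z" "Hadj n m z y" by (auto elim: relpowp_Suc_E)
  then show ?case using Suc.IH Hadj_lift[OF _ assms(2,3)] by (meson relpowp_Suc_I)
qed

lemma W_lift: "W n m d x y \<Longrightarrow> m \<ge> 1 \<Longrightarrow> c < n \<Longrightarrow> W n (Suc m) d (c#x) (c#y)"
  unfolding W_def using relpow_lift by blast

lemma Hverts_Cons: "c#v \<in> Hverts n (Suc m) \<longleftrightarrow> c < n \<and> v \<in> Hverts n m"
  unfolding Hverts_def by auto

lemma Hverts_rep: "a < n \<Longrightarrow> replicate m a \<in> Hverts n m"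
  unfolding Hverts_def by auto

lemma Hverts_SucE:
  assumes "v \<in> Hverts n (Suc m)"
  obtains c v' where "v = c#v'" "c < n" "v' \<in> Hverts n m"
  using assms unfolding Hverts_def by (cases v) auto

lemma root_edge:
  assumes "m \<ge> 1" "w \<in> Hverts n (Suc m)" "\<forall>x\<in>set w. x \<noteq> 0" "n \<ge> 1"
  shows "Hadj n (Suc m) (replicate (Suc m) 0) w"
proof -
  have lw: "length w = Suc m" using assms unfolding Hverts_def by auto
  have "w \<noteq> replicate (Suc m) 0" using assms(3) lw by (cases w) auto
  moreover have "R2 (Suc m) (replicate (Suc m) 0) w" unfolding R2_def
    using assms(1,3) lw by (intro exI[of _ 0]) (auto simp: nth_mem)
  moreover have "replicate (Suc m) 0 \<in> Hverts n (Suc m)" by (rule Hverts_rep) (use assms in simp)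
  ultimately show ?thesis unfolding Hadj_def using assms by blast
qed

lemma AB:
  assumes "n \<ge> 2" "k \<ge> 1"
  shows "(\<forall>v\<in>Hverts n k. W n k k (replicate k 0) v) \<and>
         (\<forall>u\<in>Hverts n k. \<exists>w\<in>Hverts n k. (\<forall>x\<in>set w. x \<noteq> 0) \<and> W n k k w u)"
  using assms(2)
proof (induction k rule: dec_induct)
  case base
  have A: "W n 1 1 [0] v" if vin: "v \<in> Hverts n 1" for v
  proof -
    obtain a where v: "v = [a]" "a < n" using vin
      by (cases v) (auto simp: Hverts_def)
    show ?thesis
    proof (cases "a = 0")
      case True then show ?thesis using v W_refl by simp
    next
      case False
      have "Hadj n 1 [0] v" unfolding Hadj_def R1_def using v False assms
        by (auto simp: Hverts_def)
      then show ?thesis by (rule W_edge)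
    qed
  qed
  have B: "\<exists>w\<in>Hverts n 1. (\<forall>x\<in>set w. x \<noteq> 0) \<and> W n 1 1 w u" if uin: "u \<in> Hverts n 1" for u
  proof -
    obtain a where v: "u = [a]" "a < n" using uin
      by (cases u) (auto simp: Hverts_def)
    have w: "[1] \<in> Hverts n 1" using assms by (auto simp: Hverts_def)
    show ?thesis
    proof (cases "a = 1")
      case True then show ?thesis using v W_refl w by (intro bexI[of _ "[1]"]) auto
    next
      case False
      have "Hadj n 1 [1] u" unfolding Hadj_def R1_def using v False assms
        by (auto simp: Hverts_def)
      then show ?thesis using W_edge w by (intro bexI[of _ "[1]"]) auto
    qed
  qed
  show ?case using A B by simp
next
  case (step m)
  have n0: "0 < n" using assms by simp
  have IA: "\<And>v. v\<in>Hverts n m \<Longrightarrow> W n m m (replicate m 0) v" using step.IH by blast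
  have IB: "\<And>u. u\<in>Hverts n m \<Longrightarrow> \<exists>w\<in>Hverts n m. (\<forall>x\<in>set w. x \<noteq> 0) \<and> W n m m w u"
    using step.IH by blast
  have A: "W n (Suc m) (Suc m) (replicate (Suc m) 0) v" if vin: "v \<in> Hverts n (Suc m)" for v
  proof -
    obtain c v' where v: "v = c#v'" "c < n" "v' \<in> Hverts n m" using vin by (rule Hverts_SucE)
    show ?thesis
    proof (cases "c = 0")
      case True
      have "W n (Suc m) m (0#replicate m 0) (0#v')" using W_lift[OF IA[OF v(3)] step.hyps(1) n0] assms by simp
      then show ?thesis using v True by (simp add: W_mono)
    next
      case False
      obtain w where w: "w \<in> Hverts n m" "\<forall>x\<in>set w. x \<noteq> 0" "W n m m w v'" using IB[OF v(3)] by blast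
      have e: "Hadj n (Suc m) (replicate (Suc m) 0) (c#w)"
        using root_edge[of m "c#w" n] step.hyps(1) w v False assms by (auto simp: Hverts_Cons)
      have "W n (Suc m) (1 + m) (replicate (Suc m) 0) (c#v')"
        by (rule W_trans[OF W_edge[OF e] W_lift[OF w(3) step.hyps(1) v(2)]])
      then show ?thesis using v by simp
    qed
  qed
  have B: "\<exists>w\<in>Hverts n (Suc m). (\<forall>x\<in>set w. x \<noteq> 0) \<and> W n (Suc m) (Suc m) w u"
    if uin: "u \<in> Hverts n (Suc m)" for u
  proof -
    obtain c u' where u: "u = c#u'" "c < n" "u' \<in> Hverts n m" using uin by (rule Hverts_SucE)
    show ?thesis
    proof (cases "c = 0")
      case False
      obtain w where w: "w \<in> Hverts n m" "\<forall>x\<in>set w. x \<noteq> 0" "W n m m w u'" using IB[OF u(3)] by blast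
      have "W n (Suc m) (Suc m) (c#w) (c#u')" using W_lift[OF w(3) step.hyps(1) u(2)] W_mono by simp
      then show ?thesis using w u False by (intro bexI[of _ "c#w"]) (auto simp: Hverts_Cons)
    next
      case True
      have w: "replicate (Suc m) 1 \<in> Hverts n (Suc m)" by (rule Hverts_rep) (use assms in simp)
      have e: "Hadj n (Suc m) (replicate (Suc m) 1) (replicate (Suc m) 0)"
        using root_edge[of m "replicate (Suc m) 1" n] step.hyps(1) w assms Hadj_sym by auto
      have "W n (Suc m) m (0#replicate m 0) (0#u')" using W_lift[OF IA[OF u(3)] step.hyps(1) n0] assms by simp
      then have "W n (Suc m) (1 + m) (replicate (Suc m) 1) u"
        using W_trans[OF W_edge[OF e]] u True by simp
      then show ?thesis using w by (intro bexI[of _ "replicate (Suc m) 1"]) auto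
    qed
  qed
  show ?case using A B by blast
qed

lemma A_sym: "n \<ge> 2 \<Longrightarrow> m \<ge> 1 \<Longrightarrow> v \<in> Hverts n m \<Longrightarrow> W n m m v (replicate m 0)"
  using AB W_sym by blast

lemma diam_up:
  assumes "n \<ge> 2" "k \<ge> 1"
  shows "\<forall>u\<in>Hverts n k. \<forall>v\<in>Hverts n k. W n k (2*k - 1) u v"
  using assms(2)
proof (induction k rule: dec_induct)
  case base
  show ?case
  proof (intro ballI)
    fix u v assume uin: "u \<in> Hverts n 1" and vin: "v \<in> Hverts n 1"
    obtain a where a: "u = [a]" using uin by (cases u) (auto simp: Hverts_def)
    obtain b where b: "v = [b]" using vin by (cases v) (auto simp: Hverts_def)
    show "W n 1 (2*1-1) u v"
    proof (cases "a = b")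
      case True then show ?thesis using a b W_refl by simp
    next
      case False
      have "Hadj n 1 u v" unfolding Hadj_def R1_def using uin vin a b False by auto
      then show ?thesis using W_edge by simp
    qed
  qed
next
  case (step m)
  have m1: "m \<ge> 1" using step.hyps(1) .
  have n0: "0 < n" using assms by simp
  have cross: "W n (Suc m) (2 * Suc m - 1) (0#u') (b#v')"
    if h: "u' \<in> Hverts n m" "v' \<in> Hverts n m" "b < n" "b \<noteq> 0" for u' v' b
  proof -
    have 1: "W n (Suc m) m (0#u') (0#replicate m 0)" using W_lift[OF A_sym[OF assms(1) m1 h(1)] m1 n0] .
    obtain w where w: "w \<in> Hverts n m" "\<forall>x\<in>set w. x \<noteq> 0" "W n m m w v'"
      using AB[OF assms(1) m1] h(2) by blast
    have e: "Hadj n (Suc m) (0#replicate m 0) (b#w)"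
      using root_edge[of m "b#w" n] m1 w h assms by (auto simp: Hverts_Cons)
    have "W n (Suc m) (m + 1 + m) (0#u') (b#v')"
      using W_trans[OF W_trans[OF 1 W_edge[OF e]] W_lift[OF w(3) m1 h(3)]] by simp
    then show ?thesis by (simp add: W_mono)
  qed
  show ?case
  proof (intro ballI)
    fix u v assume uin: "u \<in> Hverts n (Suc m)" and vin: "v \<in> Hverts n (Suc m)"
    obtain a u' where u: "u = a#u'" "a < n" "u' \<in> Hverts n m" using uin by (rule Hverts_SucE)
    obtain b v' where v: "v = b#v'" "b < n" "v' \<in> Hverts n m" using vin by (rule Hverts_SucE)
    show "W n (Suc m) (2 * Suc m - 1) u v"
    proof (cases "a = b")
      case True
      have "W n (Suc m) (2*m - 1) (a#u') (a#v')" using W_lift[OF _ m1 u(2)] step.IH u v by blast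
      then show ?thesis using True u v W_mono by simp
    next
      case False
      show ?thesis
      proof (cases "a = 0")
        case True then show ?thesis using cross u v False by simp
      next
        case a0: False
        show ?thesis
        proof (cases "b = 0")
          case True then show ?thesis using cross[OF v(3) u(3) u(2) a0] u v W_sym by simp
        next
          case b0: False
          have 1: "W n (Suc m) m (a#u') (a#replicate m 0)" using W_lift[OF A_sym[OF assms(1) m1 u(3)] m1 u(2)] .
          have 2: "W n (Suc m) m (b#replicate m 0) (b#v')" using W_lift[OF A_sym[OF assms(1) m1 v(3)] m1 v(2)] W_sym by blast
          have "R3 (Suc m) (a#replicate m 0) (b#replicate m 0)" unfolding R3_def
            using a0 b0 False m1 by (intro exI[of _ 1] exI[of _ "[]"] exI[of _ a] exI[of _ b]) auto
          then have e: "Hadj n (Suc m) (a#replicate m 0) (b#replicate m 0)"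
            unfolding Hadj_def using u v False n0 by (auto simp: Hverts_Cons Hverts_rep)
          have "W n (Suc m) (m + 1 + m) u v"
            using W_trans[OF W_trans[OF 1 W_edge[OF e]] 2] u v by simp
          then show ?thesis by (simp add: W_mono)
        qed
      qed
    qed
  qed
qed

definition Eb :: "nat list \<Rightarrow> nat \<Rightarrow> bool" where
  "Eb x i = (if i = 0 then x!0 \<noteq> 0 else ((x!(i-1) = 0) \<noteq> (x!i = 0)))"

lemma Eb_prefix: "\<forall>l<m. x!l = y!l \<Longrightarrow> i < m \<Longrightarrow> Eb x i = Eb y i"
  unfolding Eb_def by auto

lemma Eb_pattern: "\<forall>l<k. (x!l = 0) = (y!l = 0) \<Longrightarrow> i < k \<Longrightarrow> Eb x i = Eb y i"
  unfolding Eb_def by auto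

lemma Hverts_len: "x \<in> Hverts n k \<Longrightarrow> length x = k"
  unfolding Hverts_def by auto

lemma R2_key:
  assumes "R2 k x y" "length y = k"
  shows "\<exists>j. \<forall>i<k. i \<noteq> j \<longrightarrow> Eb x i = Eb y i"
proof -
  from assms obtain i where i: "i + 2 \<le> k" "x = take i y @ replicate (k - i) 0"
      "\<forall>j. i \<le> j \<and> j < k \<longrightarrow> y ! j \<noteq> 0" unfolding R2_def by blast
  have pre: "\<forall>l<i. x!l = y!l" using i assms(2) by (auto simp: nth_append)
  have x0: "x!l = 0" if "i \<le> l" "l < k" for l using i assms(2) that by (auto simp: nth_append)
  show ?thesis
  proof (intro exI[of _ i] allI impI)
    fix l assume l: "l < k" "l \<noteq> i"
    show "Eb x l = Eb y l"
    proof (cases "l < i")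
      case True then show ?thesis using Eb_prefix[OF pre] by blast
    next
      case False
      then have "i \<le> l - 1" "l \<noteq> 0" using l by auto
      then show ?thesis unfolding Eb_def using x0 i(3) l False by auto
    qed
  qed
qed

lemma Hadj_key:
  assumes "Hadj n k x y"
  shows "\<exists>j. \<forall>i<k. i \<noteq> j \<longrightarrow> Eb x i = Eb y i"
proof -
  have lx: "length x = k" "length y = k" using assms unfolding Hadj_def by (auto simp: Hverts_len)
  consider "R1 k x y" | "R2 k x y" | "R2 k y x" | "R3 k x y" using assms unfolding Hadj_def by blast
  then show ?thesis
  proof cases
    case 1
    then have "\<forall>l<k-1. x!l = y!l" unfolding R1_def by (metis nth_take)
    then have "\<forall>i<k. i \<noteq> k - 1 \<longrightarrow> Eb x i = Eb y i"
      using Eb_prefix[of "k-1" x y] by auto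
    then show ?thesis by blast
  next
    case 2 then show ?thesis using R2_key lx by blast
  next
    case 3 then show ?thesis using R2_key lx by metis
  next
    case 4
    then obtain i p a b where h: "a \<noteq> 0" "b \<noteq> 0"
       "x = p @ [a] @ replicate (k - i) 0" "y = p @ [b] @ replicate (k - i) 0"
      unfolding R3_def by blast
    have "\<forall>l<k. (x!l = 0) = (y!l = 0)"
    proof (intro allI impI)
      fix l assume "l < k"
      show "(x!l = 0) = (y!l = 0)" using h
        by (cases "l < length p"; cases "l = length p") (auto simp: nth_append)
    qed
    then show ?thesis using Eb_pattern by blast
  qed
qed

definition hcnt :: "nat \<Rightarrow> nat list \<Rightarrow> nat list \<Rightarrow> nat" where
  "hcnt k u x = card {i. i < k \<and> Eb u i \<noteq> Eb x i}"

lemma hcnt_step: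
  assumes "Hadj n k x y"
  shows "hcnt k u y \<le> hcnt k u x + 1"
proof -
  obtain j where j: "\<forall>i<k. i \<noteq> j \<longrightarrow> Eb x i = Eb y i" using Hadj_key[OF assms] by blast
  have "{i. i < k \<and> Eb u i \<noteq> Eb y i} \<subseteq> insert j {i. i < k \<and> Eb u i \<noteq> Eb x i}"
    using j by auto
  then have "card {i. i < k \<and> Eb u i \<noteq> Eb y i} \<le> card (insert j {i. i < k \<and> Eb u i \<noteq> Eb x i})"
    by (rule card_mono[rotated]) auto
  also have "\<dots> \<le> card {i. i < k \<and> Eb u i \<noteq> Eb x i} + 1"
    by (simp add: card_insert_if)
  finally show ?thesis unfolding hcnt_def .
qed

lemma walk_lip:
  assumes "\<And>x y. Hadj n k x y \<Longrightarrow> f y \<le> f x + (1::int)"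
  shows "(Hadj n k ^^ d) u v \<Longrightarrow> f v \<le> f u + int d"
proof (induction d arbitrary: v)
  case 0 then show ?case by simp
next
  case (Suc d)
  then obtain z where "(Hadj n k ^^ d) u z" "Hadj n k z v" by (auto elim: relpowp_Suc_E)
  then show ?case using Suc.IH assms by fastforce
qed

lemma dist_ge: "(\<And>d. (Hadj n k ^^ d) u v \<Longrightarrow> m \<le> d) \<Longrightarrow> enat m \<le> Hdist n k u v"
  unfolding Hdist_def by (rule INF_greatest) auto

lemma dist_le: "W n k d u v \<Longrightarrow> Hdist n k u v \<le> enat d"
proof -
  assume "W n k d u v"
  then obtain d' where "d' \<le> d" "(Hadj n k ^^ d') u v" unfolding W_def by blast
  then have "Hdist n k u v \<le> enat d'" unfolding Hdist_def by (intro INF_lower2[of d']) auto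
  then show ?thesis using \<open>d' \<le> d\<close> by (meson enat_ord_simps(1) order_trans)
qed

lemma cross0:
  assumes "Hadj n k x y" "x!0 = 0" "y!0 \<noteq> 0"
  shows "x = replicate k 0"
proof -
  have lx: "length x = k" "length y = k" "x \<noteq> y" using assms unfolding Hadj_def by (auto simp: Hverts_len)
  show ?thesis
  proof (cases "k \<le> 1")
    case True
    then show ?thesis using lx assms(2) by (cases x) (auto simp: Suc_le_eq)
  next
    case False
    consider "R1 k x y" | "R2 k x y" | "R2 k y x" | "R3 k x y" using assms unfolding Hadj_def by blast
    then show ?thesis
    proof cases
      case 1
      then have "take (k-1) x ! 0 = take (k-1) y ! 0" unfolding R1_def by simp
      then show ?thesis using False assms by simp
    next
      case 2
      then obtain i where i: "x = take i y @ replicate (k - i) 0" unfolding R2_def by blast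
      show ?thesis
      proof (cases "i = 0")
        case True then show ?thesis using i by simp
      next
        case False
        then have "x!0 = y!0" using i lx False \<open>\<not> k \<le> 1\<close> by (simp add: nth_append)
        then show ?thesis using assms by simp
      qed
    next
      case 3
      then obtain i where i: "y = take i x @ replicate (k - i) 0" unfolding R2_def by blast
      have "y!0 = 0 \<or> y!0 = x!0" using i lx False
        by (cases "i = 0") (auto simp: nth_append)
      then show ?thesis using assms by simp
    next
      case 4
      then obtain i p a b where h: "a \<noteq> 0"
         "x = p @ [a] @ replicate (k - i) 0" "y = p @ [b] @ replicate (k - i) 0"
        unfolding R3_def by blast
      have "x!0 \<noteq> 0 \<or> x!0 = y!0" using h by (cases p) auto
      then show ?thesis using assms by simp
    qed
  qed
qed

definition phi :: "nat \<Rightarrow> nat list \<Rightarrow> int" where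
  "phi k x = (if x!0 = 0 then - int (hcnt k (replicate k 0) x) else int (hcnt k (replicate k 0) x))"

lemma phi_step:
  assumes "Hadj n k x y"
  shows "phi k y \<le> phi k x + 1"
proof -
  let ?r = "hcnt k (replicate k 0)"
  have a: "?r y \<le> ?r x + 1" using hcnt_step[OF assms] .
  have b: "?r x \<le> ?r y + 1" using hcnt_step[OF Hadj_sym[OF assms]] .
  show ?thesis
  proof (cases "x!0 = 0 \<and> y!0 \<noteq> 0")
    case True
    then have "x = replicate k 0" using cross0 assms by blast
    then have "?r x = 0" unfolding hcnt_def by simp
    then show ?thesis using a True unfolding phi_def by simp
  next
    case False
    then show ?thesis using a b unfolding phi_def by auto
  qed
qed

lemma hcnt_self: "hcnt k u u = 0"
  unfolding hcnt_def by simp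

lemma ecc_ge:
  assumes "n \<ge> 2" "u \<in> Hverts n k"
  shows "enat k \<le> Hecc n k u"
proof -
  define v where "v = map (\<lambda>j. if (u!j = 0) \<noteq> even j then 0 else (1::nat)) [0..<k]"
  have vin: "v \<in> Hverts n k" using assms unfolding v_def Hverts_def by auto
  have vj: "(v!j = 0) = ((u!j = 0) \<noteq> even j)" if "j < k" for j
    using that unfolding v_def by auto
  have diff: "Eb u i \<noteq> Eb v i" if "i < k" for i
  proof (cases "i = 0")
    case True then show ?thesis using vj[OF that] unfolding Eb_def by auto
  next
    case False
    then have "i - 1 < k" "even (i - 1) \<longleftrightarrow> \<not> even i" using that by auto
    then show ?thesis using vj[OF that] vj[of "i-1"] False unfolding Eb_def by auto
  qed
  have "{i. i < k \<and> Eb u i \<noteq> Eb v i} = {..<k}" using diff by auto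
  then have "hcnt k u v = k" unfolding hcnt_def by simp
  moreover have lip: "\<And>x y. Hadj n k x y \<Longrightarrow> int (hcnt k u y) \<le> int (hcnt k u x) + 1"
  proof -
    fix x y assume "Hadj n k x y"
    from hcnt_step[OF this, of u] show "int (hcnt k u y) \<le> int (hcnt k u x) + 1" by linarith
  qed
  ultimately have "enat k \<le> Hdist n k u v"
  proof (intro dist_ge)
    fix d assume "(Hadj n k ^^ d) u v" "hcnt k u v = k"
    then show "k \<le> d" using walk_lip[OF lip] hcnt_self[of k u] by fastforce
  qed
  also have "\<dots> \<le> Hecc n k u" unfolding Hecc_def using vin by (rule SUP_upper)
  finally show ?thesis .
qed

lemma diam_ge:
  assumes "n \<ge> 2" "k \<ge> 1"
  shows "enat (2*k - 1) \<le> Hdiam n k"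
proof -
  define u where "u = map (\<lambda>i. if even i then 0 else (1::nat)) [0..<k]"
  define v where "v = map (\<lambda>i. if even i then 1 else (0::nat)) [0..<k]"
  have uin: "u \<in> Hverts n k" and vin: "v \<in> Hverts n k" using assms unfolding u_def v_def Hverts_def by auto
  have r0: "\<not> Eb (replicate k 0) i" if "i < k" for i using that unfolding Eb_def by auto
  have Eu: "Eb u i = (i \<noteq> 0)" if "i < k" for i using that unfolding Eb_def u_def by auto
  have Ev: "Eb v i" if "i < k" for i using that unfolding Eb_def v_def by auto
  have "{i. i < k \<and> Eb (replicate k 0) i \<noteq> Eb u i} = {1..<k}" using r0 Eu by auto
  then have ru: "hcnt k (replicate k 0) u = k - 1" unfolding hcnt_def by simp
  have "{i. i < k \<and> Eb (replicate k 0) i \<noteq> Eb v i} = {..<k}" using r0 Ev by auto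
  then have rv: "hcnt k (replicate k 0) v = k" unfolding hcnt_def by simp
  have u0: "u!0 = 0" and v0: "v!0 = 1" using assms unfolding u_def v_def by auto
  have pu: "phi k u = - int (k - 1)" and pv: "phi k v = int k"
    using ru rv u0 v0 unfolding phi_def by auto
  have "enat (2*k - 1) \<le> Hdist n k u v"
  proof (intro dist_ge)
    fix d assume wd: "(Hadj n k ^^ d) u v"
    have lip: "\<And>x y. Hadj n k x y \<Longrightarrow> phi k y \<le> phi k x + 1" using phi_step by blast
    from walk_lip[where f="phi k", OF lip wd] have "phi k v \<le> phi k u + int d" by blast
    then show "2*k - 1 \<le> d" using pu pv assms by linarith
  qed
  also have "\<dots> \<le> Hecc n k u" unfolding Hecc_def using vin by (rule SUP_upper)
  also have "\<dots> \<le> Hdiam n k" unfolding Hdiam_def using uin by (rule SUP_upper)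
  finally show ?thesis .
qed

theorem mainTheorem4:
  fixes n k :: nat
  assumes "n \<ge> 2" and "k \<ge> 1"
  shows "Hecc n k (Hroot k) = enat k \<and> Hradius n k = enat k
         \<and> Hdiam n k = enat (2 * k - 1)"
proof -
  have rin: "Hroot k \<in> Hverts n k" unfolding Hroot_def using assms by (intro Hverts_rep) simp
  have e1: "Hecc n k (Hroot k) \<le> enat k" unfolding Hecc_def
  proof (rule SUP_least)
    fix v assume "v \<in> Hverts n k"
    then show "Hdist n k (Hroot k) v \<le> enat k" using AB[OF assms] dist_le unfolding Hroot_def by blast
  qed
  have e: "Hecc n k (Hroot k) = enat k" using e1 ecc_ge[OF assms(1) rin] by simp
  have r1: "Hradius n k \<le> enat k" unfolding Hradius_def using rin e by (metis INF_lower)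
  have r2: "enat k \<le> Hradius n k" unfolding Hradius_def using ecc_ge[OF assms(1)] by (rule INF_greatest)
  have d1: "Hdiam n k \<le> enat (2*k-1)" unfolding Hdiam_def Hecc_def
  proof (intro SUP_least)
    fix u v assume "u \<in> Hverts n k" "v \<in> Hverts n k"
    then show "Hdist n k u v \<le> enat (2*k-1)" using diam_up[OF assms] dist_le by blast
  qed
  show ?thesis using e r1 r2 d1 diam_ge[OF assms] by simp
qed

end
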